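(* Let $(\ell_n)$, $(\sigma_{n,0})$, $(\sigma_{n,1})$, $(\sigma_{n,-1})$ ($n\in\mathbb N$) be sequences of strictly positive reals and $(\kappa_n)_{n\in\mathbb N}$ a sequence of reals. Put $\sigma_n=\max(\sigma_{n,-1},\sigma_{n,1})$ and assume $\sigma_n\le\sigma_{n,0}$ and $\kappa_n\ge0$ for all $n\in\mathbb N$, and $$\liminf_{n\to\infty}\frac{\ell_n}{n^2\sigma_{n,0}}=0 .$$ Let $x_0\in\mathbb R$ satisfy $\sigma_{1,-1}x_0\ge-\kappa_1$ (e.g. $x_0=0$). Then there exists a unique $x_1>0$ such that the sequence $(x_n)_{n\in\mathbb N}$ satisfying $$\ell_n = x_n\big(\sigma_{n,1}x_{n+1}+\sigma_{n,0}x_n+\sigma_{n,-1}x_{n-1}\big)+\kappa_n x_n,\qquad n\in\mathbb N,$$ is positive (i.e. $x_n>0$ for all $n\in\mathbb N$).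
   Context: $\mathbb N=\{1,2,3,\dots\}$. Since $\sigma_{n,1}>0$, the equation determines $x_{n+1}$ from $x_{n-1}$ and $x_n\ne0$, so the sequence is determined by $x_0$ and $x_1$ as long as no $x_n$ ($n\ge1$) vanishes. *)

theory Defs
  imports Complex_Main "HOL-Library.Extended_Real" "HOL-Library.Liminf_Limsup"
begin

end

theory Submission imports Defs "HOL-Analysis.Analysis" begin

lemma first_zero_left:
  fixes g :: "real \<Rightarrow> real"
  assumes ab: "a < b" and cg: "continuous_on {a<..<b} g"
    and ea: "eventually (\<lambda>t. g t > 0) (at_right a)"
    and eb: "eventually (\<lambda>t. g t < 0) (at_left b)"
  shows "\<exists>z\<in>{a<..<b}. g z = 0 \<and> (\<forall>t\<in>{a<..<z}. g t > 0)"
proof -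
  obtain p1 where p1: "p1 > a" "\<And>y. y > a \<Longrightarrow> y < p1 \<Longrightarrow> g y > 0"
    using ea unfolding eventually_at_right_field by blast
  obtain q1 where q1: "q1 < b" "\<And>y. y > q1 \<Longrightarrow> y < b \<Longrightarrow> g y < 0"
    using eb unfolding eventually_at_left_field by blast
  define m where "m = (a+b)/2"
  define p where "p = (a + min p1 m)/2"
  define q where "q = (max q1 m + b)/2"
  have mm: "a < p" "p < m" "m < q" "q < b" "p < p1" "q1 < q"
    using ab p1(1) q1(1) unfolding m_def p_def q_def by (auto simp: min_def max_def field_simps)
  have gp: "g p > 0" using p1(2)[of p] mm by auto
  have gq: "g q < 0" using q1(2)[of q] mm by auto
  have cpq: "continuous_on {p..q} g"
    using cg by (rule continuous_on_subset) (use mm in auto)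
  define Z where "Z = {t \<in> {p..q}. g t = 0}"
  have Zc: "closed Z" unfolding Z_def
    by (rule continuous_closed_preimage_constant[OF cpq]) simp
  obtain s where s: "p \<le> s" "s \<le> q" "g s = 0"
    using IVT2'[of g q 0 p, OF _ _ _ cpq] gp gq mm by force
  have Zne: "Z \<noteq> {}" using s unfolding Z_def by auto
  have Zb: "bdd_below Z" unfolding Z_def by (rule bdd_belowI[of _ p]) auto
  define z where "z = Inf Z"
  have zZ: "z \<in> Z" unfolding z_def using closed_contains_Inf[OF Zne Zb Zc] .
  have zle: "\<And>t. t \<in> Z \<Longrightarrow> z \<le> t" unfolding z_def using Zb by (simp add: cInf_lower)
  have zr: "p \<le> z" "z \<le> q" "g z = 0" using zZ unfolding Z_def by auto
  have pos: "g t > 0" if t: "a < t" "t < z" for t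
  proof (cases "t \<le> p")
    case True then show ?thesis using p1(2)[of t] t mm by auto
  next
    case False
    show ?thesis
    proof (rule ccontr)
      assume "\<not> g t > 0"
      hence "g t \<le> 0" by simp
      have cpt: "continuous_on {p..t} g"
        using cpq by (rule continuous_on_subset) (use t zr in auto)
      obtain u where u: "p \<le> u" "u \<le> t" "g u = 0"
        using IVT2'[of g t 0 p, OF _ _ _ cpt] gp \<open>g t \<le> 0\<close> False by force
      have "u \<in> Z" using u t zr unfolding Z_def by auto
      thus False using zle[of u] u t by auto
    qed
  qed
  show ?thesis using zr mm pos by (intro bexI[of _ z]) auto
qed

lemma first_zero_right:
  fixes g :: "real \<Rightarrow> real"
  assumes ab: "a < b" and cg: "continuous_on {a<..<b} g"
    and ea: "eventually (\<lambda>t. g t < 0) (at_right a)"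
    and eb: "eventually (\<lambda>t. g t > 0) (at_left b)"
  shows "\<exists>z\<in>{a<..<b}. g z = 0 \<and> (\<forall>t\<in>{z<..<b}. g t > 0)"
proof -
  obtain p1 where p1: "p1 > a" "\<And>y. y > a \<Longrightarrow> y < p1 \<Longrightarrow> g y < 0"
    using ea unfolding eventually_at_right_field by blast
  obtain q1 where q1: "q1 < b" "\<And>y. y > q1 \<Longrightarrow> y < b \<Longrightarrow> g y > 0"
    using eb unfolding eventually_at_left_field by blast
  define m where "m = (a+b)/2"
  define p where "p = (a + min p1 m)/2"
  define q where "q = (max q1 m + b)/2"
  have mm: "a < p" "p < m" "m < q" "q < b" "p < p1" "q1 < q"
    using ab p1(1) q1(1) unfolding m_def p_def q_def by (auto simp: min_def max_def field_simps)
  have gp: "g p < 0" using p1(2)[of p] mm by auto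
  have gq: "g q > 0" using q1(2)[of q] mm by auto
  have cpq: "continuous_on {p..q} g"
    using cg by (rule continuous_on_subset) (use mm in auto)
  define Z where "Z = {t \<in> {p..q}. g t = 0}"
  have Zc: "closed Z" unfolding Z_def
    by (rule continuous_closed_preimage_constant[OF cpq]) simp
  obtain s where s: "p \<le> s" "s \<le> q" "g s = 0"
    using IVT'[of g p 0 q, OF _ _ _ cpq] gp gq mm by force
  have Zne: "Z \<noteq> {}" using s unfolding Z_def by auto
  have Zb: "bdd_above Z" unfolding Z_def by (rule bdd_aboveI[of _ q]) auto
  define z where "z = Sup Z"
  have zZ: "z \<in> Z" unfolding z_def using closed_contains_Sup[OF Zne Zb Zc] .
  have zle: "\<And>t. t \<in> Z \<Longrightarrow> t \<le> z" unfolding z_def using Zb by (simp add: cSup_upper)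
  have zr: "p \<le> z" "z \<le> q" "g z = 0" using zZ unfolding Z_def by auto
  have pos: "g t > 0" if t: "z < t" "t < b" for t
  proof (cases "t \<ge> q")
    case True then show ?thesis using q1(2)[of t] t mm by auto
  next
    case False
    show ?thesis
    proof (rule ccontr)
      assume "\<not> g t > 0"
      hence "g t \<le> 0" by simp
      have cpt: "continuous_on {t..q} g"
        using cpq by (rule continuous_on_subset) (use t zr in auto)
      obtain u where u: "t \<le> u" "u \<le> q" "g u = 0"
        using IVT'[of g t 0 q, OF _ _ _ cpt] gq \<open>g t \<le> 0\<close> False by force
      have "u \<in> Z" using u t zr unfolding Z_def by auto
      thus False using zle[of u] u t by auto
    qed
  qed
  show ?thesis using zr mm pos by (intro bexI[of _ z]) auto
qed


lemma isCont_left: "isCont f (z::real) \<Longrightarrow> (f \<longlongrightarrow> f z) (at_left z)"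
  by (simp add: isCont_def filterlim_at_split)
lemma isCont_right: "isCont f (z::real) \<Longrightarrow> (f \<longlongrightarrow> f z) (at_right z)"
  by (simp add: isCont_def filterlim_at_split)
lemma ev_right: "(a::real) < b \<Longrightarrow> eventually (\<lambda>t. a < t \<and> t < b) (at_right a)"
  unfolding eventually_at_right_field by auto
lemma ev_left: "(a::real) < b \<Longrightarrow> eventually (\<lambda>t. a < t \<and> t < b) (at_left b)"
  unfolding eventually_at_left_field by auto

locale rec_ctx =
  fixes l s0 s1 sm \<kappa> :: "nat \<Rightarrow> real" and xz :: real
  assumes l_pos: "\<And>n. n \<ge> 1 \<Longrightarrow> l n > 0"
    and s0_pos: "\<And>n. n \<ge> 1 \<Longrightarrow> s0 n > 0"
    and s1_pos: "\<And>n. n \<ge> 1 \<Longrightarrow> s1 n > 0"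
    and sm_pos: "\<And>n. n \<ge> 1 \<Longrightarrow> sm n > 0"
    and sigma_le: "\<And>n. n \<ge> 1 \<Longrightarrow> max (sm n) (s1 n) \<le> s0 n"
    and kappa_nonneg: "\<And>n. n \<ge> 1 \<Longrightarrow> \<kappa> n \<ge> 0"
    and x0_cond: "sm 1 * xz \<ge> - \<kappa> 1"
begin

fun X :: "real \<Rightarrow> nat \<Rightarrow> real" where
  "X t 0 = xz"
| "X t (Suc 0) = t"
| "X t (Suc (Suc n)) = (l (Suc n) / X t (Suc n) - \<kappa> (Suc n) - s0 (Suc n) * X t (Suc n) - sm (Suc n) * X t n) / s1 (Suc n)"

lemma X_rec: "n \<ge> 1 \<Longrightarrow> X t (n+1) = (l n / X t n - \<kappa> n - s0 n * X t n - sm n * X t (n-1)) / s1 n"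
  by (cases n) auto

lemma X_cont: "(\<forall>k. 1 \<le> k \<and> k < n \<longrightarrow> X t k \<noteq> 0) \<Longrightarrow> isCont (\<lambda>t. X t n) t"
proof (induction n rule: less_induct)
  case (less n)
  show ?case
  proof (cases n)
    case 0 then show ?thesis by simp
  next
    case (Suc m)
    show ?thesis
    proof (cases m)
      case 0 then show ?thesis using Suc by simp
    next
      case (Suc j)
      have h1: "isCont (\<lambda>t. X t (Suc j)) t" using less.IH[of "Suc j"] less.prems \<open>n = Suc m\<close> Suc by auto
      have h0: "isCont (\<lambda>t. X t j) t" using less.IH[of j] less.prems \<open>n = Suc m\<close> Suc by auto
      have nz: "X t (Suc j) \<noteq> 0" using less.prems \<open>n = Suc m\<close> Suc by auto
      have s: "s1 (Suc j) \<noteq> 0" using s1_pos[of "Suc j"] by auto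
      show ?thesis using \<open>n = Suc m\<close> Suc h1 h0 nz s
        by (auto intro!: continuous_intros)
    qed
  qed
qed

lemma lim_top:
  assumes n: "n \<ge> 1" and t0: "((\<lambda>t. X t n) \<longlongrightarrow> 0) F"
    and pos: "eventually (\<lambda>t. X t n > 0) F" and c: "((\<lambda>t. X t (n-1)) \<longlongrightarrow> c) F"
  shows "filterlim (\<lambda>t. X t (n+1)) at_top F"
proof -
  have e: "(\<lambda>t. X t (n+1)) = (\<lambda>t. inverse (s1 n) * ((- \<kappa> n - s0 n * X t n - sm n * X t (n-1)) + l n * inverse (X t n)))"
    using X_rec[OF n] by (auto simp: divide_inverse algebra_simps)
  have 1: "filterlim (\<lambda>t. l n * inverse (X t n)) at_top F"
    by (rule filterlim_tendsto_pos_mult_at_top[OF tendsto_const])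
       (use l_pos n t0 pos in \<open>auto intro: filterlim_inverse_at_top\<close>)
  have 2: "((\<lambda>t. - \<kappa> n - s0 n * X t n - sm n * X t (n-1)) \<longlongrightarrow> (- \<kappa> n - s0 n * 0 - sm n * c)) F"
    by (intro tendsto_intros t0 c)
  show ?thesis unfolding e
  proof (rule filterlim_tendsto_pos_mult_at_top[OF tendsto_const _ filterlim_tendsto_add_at_top[OF 2 1]])
    show "0 < inverse (s1 n)" using s1_pos[OF n] by simp
  qed
qed

lemma ev_neg:
  assumes m: "m \<ge> 1" and c: "((\<lambda>t. X t (m-1)) \<longlongrightarrow> c) F"
    and top: "filterlim (\<lambda>t. X t m) at_top F"
  shows "eventually (\<lambda>t. X t (m+1) < 0) F"
proof -
  have e: "(\<lambda>t. X t (m+1)) = (\<lambda>t. inverse (s1 m) * ((- \<kappa> m - sm m * X t (m-1) + l m * inverse (X t m)) + - (s0 m * X t m)))"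
    using X_rec[OF m] by (auto simp: divide_inverse algebra_simps)
  have h1: "((\<lambda>t. l m * inverse (X t m)) \<longlongrightarrow> l m * 0) F"
    by (intro tendsto_intros tendsto_inverse_0_at_top top)
  have h2: "((\<lambda>t. - \<kappa> m - sm m * X t (m-1) + l m * inverse (X t m)) \<longlongrightarrow> (- \<kappa> m - sm m * c + l m * 0)) F"
    by (intro tendsto_intros h1 c)
  have h3: "filterlim (\<lambda>t. s0 m * X t m) at_top F"
    by (rule filterlim_tendsto_pos_mult_at_top[OF tendsto_const _ top]) (use s0_pos[OF m] in simp)
  have h4: "filterlim (\<lambda>t. - (s0 m * X t m)) at_bot F"
    using filterlim_uminus_at_top[THEN iffD1, OF h3] .
  have h5: "filterlim (\<lambda>t. (- \<kappa> m - sm m * X t (m-1) + l m * inverse (X t m)) + - (s0 m * X t m)) at_bot F"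
    using filterlim_tendsto_add_at_bot_iff[OF h2, THEN iffD2, OF h4] .
  have h6: "filterlim (\<lambda>t. X t (m+1)) at_bot F" unfolding e
  proof (rule filterlim_tendsto_pos_mult_at_bot[OF tendsto_const _ h5])
    show "0 < inverse (s1 m)" using s1_pos[OF m] by simp
  qed
  hence "eventually (\<lambda>t. X t (m+1) \<le> -1) F" unfolding filterlim_at_bot by auto
  thus ?thesis by eventually_elim auto
qed

end

context rec_ctx begin

definition P :: "nat \<Rightarrow> real \<Rightarrow> bool" where
  "P n t \<longleftrightarrow> (\<forall>k. 1 \<le> k \<and> k \<le> n \<longrightarrow> X t k > 0)"

definition Fe :: "real \<Rightarrow> real \<Rightarrow> bool \<Rightarrow> real filter" where
  "Fe a b s = (if s then at_left b else at_right a)"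
definition Ff :: "real \<Rightarrow> real \<Rightarrow> bool \<Rightarrow> real filter" where
  "Ff a b s = (if s then at_right a else at_left b)"

definition Inv :: "nat \<Rightarrow> real \<Rightarrow> real \<Rightarrow> bool \<Rightarrow> bool" where
  "Inv n a b s \<longleftrightarrow> 1 \<le> n \<and> a < b \<and> (\<forall>t\<in>{a<..<b}. P n t) \<and>
     ((\<lambda>t. X t n) \<longlongrightarrow> 0) (Fe a b s) \<and> (\<exists>c. ((\<lambda>t. X t (n-1)) \<longlongrightarrow> c) (Fe a b s)) \<and>
     eventually (\<lambda>t. X t (n+1) < 0) (Ff a b s)"

definition R :: "bool \<Rightarrow> real \<Rightarrow> real \<Rightarrow> real \<Rightarrow> real \<Rightarrow> bool" where
  "R s a b a' b' \<longleftrightarrow> (if s then b' = b \<and> a < a' \<and> a' < b else a' = a \<and> a < b' \<and> b' < b)"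

lemma P_cont: "P n t \<Longrightarrow> isCont (\<lambda>t. X t (Suc n)) t"
  by (rule X_cont) (auto simp: P_def)

lemma P_cont': "P n t \<Longrightarrow> isCont (\<lambda>t. X t n) t"
  by (rule X_cont) (auto simp: P_def)

lemma step:
  assumes I: "Inv n a b s"
  shows "\<exists>a' b'. Inv (Suc n) a' b' (\<not> s) \<and> R s a b a' b'"
proof -
  have n1: "1 \<le> n" and ab: "a < b" and Pn: "\<And>t. t \<in> {a<..<b} \<Longrightarrow> P n t"
    and t0: "((\<lambda>t. X t n) \<longlongrightarrow> 0) (Fe a b s)"
    and neg: "eventually (\<lambda>t. X t (n+1) < 0) (Ff a b s)"
    using I unfolding Inv_def by auto
  obtain c where c: "((\<lambda>t. X t (n-1)) \<longlongrightarrow> c) (Fe a b s)" using I unfolding Inv_def by auto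
  have inE: "eventually (\<lambda>t. a < t \<and> t < b) (Fe a b s)"
    using ev_right[OF ab] ev_left[OF ab] by (auto simp: Fe_def)
  have posn: "eventually (\<lambda>t. X t n > 0) (Fe a b s)"
    using inE by eventually_elim (use Pn n1 in \<open>auto simp: P_def\<close>)
  have top: "filterlim (\<lambda>t. X t (n+1)) at_top (Fe a b s)"
    by (rule lim_top[OF n1 t0 posn c])
  have evpos: "eventually (\<lambda>t. X t (n+1) > 0) (Fe a b s)"
  proof -
    have "eventually (\<lambda>t. 1 \<le> X t (n+1)) (Fe a b s)" using top unfolding filterlim_at_top by auto
    thus ?thesis by eventually_elim auto
  qed
  have cont: "continuous_on {a<..<b} (\<lambda>t. X t (Suc n))"
    by (rule continuous_at_imp_continuous_on) (use Pn P_cont in auto)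
  have negE: "eventually (\<lambda>t. X t (Suc n + 1) < 0) (Fe a b s)"
    by (rule ev_neg) (use t0 top in auto)
  show ?thesis
  proof (cases s)
    case False
    obtain z where z: "z \<in> {a<..<b}" "X z (Suc n) = 0" "\<And>t. t \<in> {a<..<z} \<Longrightarrow> X t (Suc n) > 0"
      using first_zero_left[OF ab cont] evpos neg False by (auto simp: Fe_def Ff_def)
    have Pz: "P n z" using Pn z(1) by auto
    have "Inv (Suc n) a z True"
      unfolding Inv_def Fe_def Ff_def
    proof (intro conjI)
      show "\<forall>t\<in>{a<..<z}. P (Suc n) t"
        using Pn z by (auto simp: P_def le_Suc_eq)
      show "((\<lambda>t. X t (Suc n)) \<longlongrightarrow> 0) (if True then at_left z else at_right a)"
        using isCont_left[OF P_cont[OF Pz]] z(2) by simp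
      show "\<exists>c. ((\<lambda>t. X t (Suc n - 1)) \<longlongrightarrow> c) (if True then at_left z else at_right a)"
        using isCont_left[OF P_cont'[OF Pz]] by auto
      show "\<forall>\<^sub>F t in if True then at_right a else at_left z. X t (Suc n + 1) < 0"
        using negE False by (simp add: Fe_def)
    qed (use z in auto)
    thus ?thesis using False z(1) by (auto simp: R_def)
  next
    case True
    obtain z where z: "z \<in> {a<..<b}" "X z (Suc n) = 0" "\<And>t. t \<in> {z<..<b} \<Longrightarrow> X t (Suc n) > 0"
      using first_zero_right[OF ab cont] evpos neg True by (auto simp: Fe_def Ff_def)
    have Pz: "P n z" using Pn z(1) by auto
    have "Inv (Suc n) z b False"
      unfolding Inv_def Fe_def Ff_def
    proof (intro conjI)
      show "\<forall>t\<in>{z<..<b}. P (Suc n) t"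
        using Pn z by (auto simp: P_def le_Suc_eq)
      show "((\<lambda>t. X t (Suc n)) \<longlongrightarrow> 0) (if False then at_left b else at_right z)"
        using isCont_right[OF P_cont[OF Pz]] z(2) by simp
      show "\<exists>c. ((\<lambda>t. X t (Suc n - 1)) \<longlongrightarrow> c) (if False then at_left b else at_right z)"
        using isCont_right[OF P_cont'[OF Pz]] by auto
      show "\<forall>\<^sub>F t in if False then at_right z else at_left b. X t (Suc n + 1) < 0"
        using negE True by (simp add: Fe_def)
    qed (use z in auto)
    thus ?thesis using True z(1) by (auto simp: R_def)
  qed
qed

lemma base: "Inv 1 0 (l 1 / s0 1 + 2) False"
proof -
  define M where "M = l 1 / s0 1 + 2"
  have l1: "l 1 > 0" and s01: "s0 1 > 0" and s11: "s1 1 > 0" using l_pos s0_pos s1_pos by auto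
  have k: "\<kappa> 1 + sm 1 * xz \<ge> 0" using x0_cond by linarith
  have M0: "0 < M" unfolding M_def using l1 s01 by (simp add: add_pos_nonneg)
  have negM: "eventually (\<lambda>t. X t (1+1) < 0) (at_left M)"
    unfolding eventually_at_left_field
  proof (intro exI[of _ "M - 1"] conjI allI impI)
    fix t assume t: "M - 1 < t" "t < M"
    have t1: "t > 1" using t l1 s01 unfolding M_def by (smt (verit) divide_pos_pos)
    have "t > l 1 / s0 1" using t unfolding M_def by simp
    hence "s0 1 * t > l 1" using s01 by (simp add: field_simps)
    moreover have "l 1 / t < l 1" using t1 l1 by (simp add: divide_less_eq)
    ultimately have "l 1 / t - \<kappa> 1 - s0 1 * t - sm 1 * xz < 0" using k by linarith
    thus "X t (1+1) < 0" using s11 by (simp add: divide_neg_pos)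
  qed (simp)
  show ?thesis
    unfolding Inv_def Fe_def Ff_def M_def[symmetric]
  proof (intro conjI)
    show "\<forall>t\<in>{0<..<M}. P 1 t" by (auto simp: P_def)
    show "((\<lambda>t. X t 1) \<longlongrightarrow> 0) (if False then at_left M else at_right 0)"
      by (simp add: tendsto_ident_at)
    show "\<exists>c. ((\<lambda>t. X t (1 - 1)) \<longlongrightarrow> c) (if False then at_left M else at_right 0)"
      by auto
    show "\<forall>\<^sub>F t in if False then at_right 0 else at_left M. X t (1 + 1) < 0"
      using negM by simp
  qed (use M0 in auto)
qed

end

context rec_ctx begin

lemma exists_pos: "\<exists>t. \<forall>n\<ge>1. X t n > 0"
proof -
  define stp where "stp = (\<lambda>n (a::real, b::real, s::bool).
      let p = (SOME p. Inv (Suc n) (fst p) (snd p) (\<not> s) \<and> R s a b (fst p) (snd p)) in (fst p, snd p, \<not> s))"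
  define S where "S = rec_nat (0, l 1 / s0 1 + 2, False) (\<lambda>k st. stp (Suc k) st)"
  define a where "a k = fst (S k)" for k
  define b where "b k = fst (snd (S k))" for k
  define sd where "sd k = snd (snd (S k))" for k
  have S0: "S 0 = (0, l 1 / s0 1 + 2, False)" unfolding S_def by simp
  have SS: "S (Suc k) = stp (Suc k) (S k)" for k unfolding S_def by simp
  have stpI: "Inv (Suc n) (fst (stp n (a', b', s))) (fst (snd (stp n (a', b', s)))) (snd (snd (stp n (a', b', s))))
      \<and> R s a' b' (fst (stp n (a', b', s))) (fst (snd (stp n (a', b', s)))) \<and> snd (snd (stp n (a', b', s))) = (\<not> s)"
    if "Inv n a' b' s" for n a' b' s
  proof -
    have "\<exists>p. Inv (Suc n) (fst p) (snd p) (\<not> s) \<and> R s a' b' (fst p) (snd p)"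
      using step[OF that] by auto
    from someI_ex[OF this] show ?thesis unfolding stp_def by (simp add: Let_def)
  qed
  have main: "Inv (Suc k) (a k) (b k) (sd k) \<and> R (sd k) (a k) (b k) (a (Suc k)) (b (Suc k)) \<and> sd (Suc k) = (\<not> sd k)" for k
  proof (induction k)
    case 0
    have "Inv 1 (a 0) (b 0) (sd 0)" using base unfolding a_def b_def sd_def S0 by simp
    then show ?case using stpI[of 1 "a 0" "b 0" "sd 0"] unfolding a_def b_def sd_def SS
      by (simp add: S0)
  next
    case (Suc k)
    have I: "Inv (Suc (Suc k)) (a (Suc k)) (b (Suc k)) (sd (Suc k))"
      using Suc stpI[of "Suc k" "a k" "b k" "sd k"] unfolding a_def b_def sd_def SS
      by (cases "S k") simp
    show ?case using I stpI[OF I] unfolding a_def b_def sd_def SS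
      by (cases "S (Suc k)") simp
  qed
  have ab: "a k < b k" for k using main[of k] unfolding Inv_def by auto
  have amono: "a k \<le> a (Suc k)" and bmono: "b (Suc k) \<le> b k" for k
    using main[of k] unfolding R_def by (auto split: if_splits)
  have a2: "a k < a (Suc (Suc k))" and b2: "b (Suc (Suc k)) < b k" for k
    using main[of k] main[of "Suc k"] amono[of k] amono[of "Suc k"] bmono[of k] bmono[of "Suc k"]
    unfolding R_def by (auto split: if_splits)
  have ainc: "incseq a" using amono by (rule incseq_SucI)
  have bdec: "decseq b" using bmono by (simp add: decseq_SucI)
  have aleb: "a i \<le> b j" for i j
  proof -
    have "a i \<le> a (max i j)" using ainc by (simp add: incseq_def)
    also have "\<dots> < b (max i j)" by (rule ab)
    also have "\<dots> \<le> b j" using bdec by (simp add: decseq_def)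
    finally show ?thesis by simp
  qed
  define t where "t = (SUP k. a k)"
  have bdd: "bdd_above (range a)" using aleb by (auto intro!: bdd_aboveI[of _ "b 0"])
  have at: "a k \<le> t" for k unfolding t_def using bdd by (simp add: cSUP_upper)
  have tb: "t \<le> b k" for k unfolding t_def by (rule cSUP_least) (use aleb in auto)
  have "P (Suc k) t" for k
  proof -
    have "t \<in> {a k<..<b k}" using a2[of k] b2[of k] at[of "Suc (Suc k)"] tb[of "Suc (Suc k)"] by auto
    thus ?thesis using main[of k] unfolding Inv_def by auto
  qed
  hence "\<forall>n\<ge>1. X t n > 0"
    by (metis P_def Suc_pred' le_less_trans less_one nat_le_linear not_less order.refl)
  thus ?thesis by blast
qed

end

context rec_ctx begin

lemma sq_bound:
  fixes z :: "nat \<Rightarrow> real"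
  assumes z0: "z 0 = xz"
    and ez: "\<forall>n\<ge>1. l n = z n * (s1 n * z (n+1) + s0 n * z n + sm n * z (n-1)) + \<kappa> n * z n"
    and pz: "\<forall>n\<ge>1. z n > 0" and n: "n \<ge> 1"
  shows "s0 n * (z n)^2 \<le> l n"
proof -
  have zp: "z (n+1) > 0" using pz by simp
  have a: "s1 n * z (n+1) \<ge> 0" using s1_pos[OF n] zp by simp
  have b: "sm n * z (n-1) + \<kappa> n \<ge> 0"
  proof (cases "n = 1")
    case True then show ?thesis using x0_cond z0 by simp
  next
    case False
    then have "z (n-1) > 0" using pz n by auto
    then show ?thesis using sm_pos[OF n] kappa_nonneg[OF n] by simp
  qed
  have "l n - s0 n * (z n)^2 = z n * (s1 n * z (n+1) + (sm n * z (n-1) + \<kappa> n))"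
    using ez n by (simp add: power2_eq_square algebra_simps)
  also have "\<dots> \<ge> 0"
    using mult_nonneg_nonneg[OF less_imp_le[OF pz[rule_format, OF n]] add_nonneg_nonneg[OF a b]] .
  finally show ?thesis by simp
qed

lemma uniq_bound:
  fixes x y :: "nat \<Rightarrow> real"
  assumes x0: "x 0 = xz" and y0: "y 0 = xz"
    and ex: "\<forall>n\<ge>1. l n = x n * (s1 n * x (n+1) + s0 n * x n + sm n * x (n-1)) + \<kappa> n * x n"
    and ey: "\<forall>n\<ge>1. l n = y n * (s1 n * y (n+1) + s0 n * y n + sm n * y (n-1)) + \<kappa> n * y n"
    and px: "\<forall>n\<ge>1. x n > 0" and py: "\<forall>n\<ge>1. y n > 0"
    and lt: "x 1 < y 1"
  shows "\<forall>n\<ge>1. (y 1 - x 1)^2 / 4 \<le> l n / ((real n)^2 * s0 n)"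
proof -
  define d where "d k = y k - x k" for k
  define e where "e k = (-1)^(k+1) * d k" for k
  define \<delta> where "\<delta> = d 1"
  have \<delta>pos: "\<delta> > 0" using lt unfolding \<delta>_def d_def by simp
  have Q: "e (Suc k) - e k \<ge> \<delta> \<and> e k \<ge> 0" for k
  proof (induction k)
    case 0
    then show ?case using x0 y0 by (simp add: e_def d_def \<delta>_def)
  next
    case (Suc k)
    define n where "n = Suc k"
    have n1: "n \<ge> 1" unfolding n_def by simp
    define \<sigma> :: real where "\<sigma> = (-1)^k"
    have ek: "e k = - \<sigma> * d k" unfolding e_def \<sigma>_def by simp
    have en: "e n = \<sigma> * d n" unfolding e_def \<sigma>_def n_def by simp
    have en1: "e (Suc n) = - \<sigma> * d (Suc n)" unfolding e_def \<sigma>_def n_def by simp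
    have exn: "l n = x n * (s1 n * x (Suc n) + s0 n * x n + sm n * x k) + \<kappa> n * x n"
      using ex n1 unfolding n_def by auto
    have eyn: "l n = y n * (s1 n * y (Suc n) + s0 n * y n + sm n * y k) + \<kappa> n * y n"
      using ey n1 unfolding n_def by auto
    define Pr where "Pr = x n * y n"
    have Prpos: "Pr > 0" using px py n1 unfolding Pr_def by simp
    have eqdiff: "- l n * d n = Pr * (s1 n * d (Suc n) + s0 n * d n + sm n * d k)"
      unfolding Pr_def d_def using exn eyn by algebra
    have ident: "Pr * s1 n * e (Suc n) = (l n + Pr * s0 n) * e n - Pr * sm n * e k"
      unfolding ek en en1 using eqdiff by algebra
    have lP: "l n \<ge> Pr * s0 n"
    proof -
      have "s0 n * (x n)^2 \<le> l n" by (rule sq_bound[OF x0 ex px n1])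
      moreover have "s0 n * (y n)^2 \<le> l n" by (rule sq_bound[OF y0 ey py n1])
      moreover have "2 * (x n * y n) \<le> (x n)^2 + (y n)^2" using zero_le_power2[of "x n - y n"] unfolding power2_diff by linarith
      moreover have "s0 n > 0" using s0_pos[OF n1] .
      ultimately have "s0 n * (2 * (x n * y n)) \<le> s0 n * ((x n)^2 + (y n)^2)"
        by (intro mult_left_mono) auto
      then show ?thesis using \<open>s0 n * (x n)^2 \<le> l n\<close> \<open>s0 n * (y n)^2 \<le> l n\<close>
        unfolding Pr_def by (simp add: algebra_simps)
    qed
    have IH1: "e n - e k \<ge> \<delta>" and IH2: "e k \<ge> 0" using Suc.IH unfolding n_def by auto
    have enn: "e n \<ge> 0" using IH1 IH2 \<delta>pos by linarith
    have sg: "sm n \<le> s0 n" "s1 n \<le> s0 n" using sigma_le[OF n1] by auto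
    have h1: "(l n - Pr * s0 n) * e n \<ge> 0" using lP enn by simp
    have h2: "(s0 n - s1 n) * (Pr * e n) \<ge> 0" using sg Prpos enn by simp
    have h3: "(s0 n - sm n) * (Pr * e k) \<ge> 0" using sg Prpos IH2 by simp
    have h4: "(s0 n - s1 n) * (Pr * \<delta>) \<ge> 0" using sg Prpos \<delta>pos by simp
    have h5: "Pr * s0 n * (e n - e k - \<delta>) \<ge> 0" using Prpos s0_pos[OF n1] IH1 by simp
    have "Pr * s1 n * (e (Suc n) - e n - \<delta>) =
        (l n - Pr * s0 n) * e n + (s0 n - s1 n) * (Pr * e n) + (s0 n - sm n) * (Pr * e k)
        + (s0 n - s1 n) * (Pr * \<delta>) + Pr * s0 n * (e n - e k - \<delta>)"
      using ident by (simp add: algebra_simps)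
    also have "\<dots> \<ge> 0" using h1 h2 h3 h4 h5 by linarith
    finally have "Pr * s1 n * (e (Suc n) - e n - \<delta>) \<ge> 0" .
    moreover have "Pr * s1 n > 0" using Prpos s1_pos[OF n1] by simp
    ultimately have "e (Suc n) - e n - \<delta> \<ge> 0" by (simp add: zero_le_mult_iff)
    then show ?case using enn unfolding n_def by simp
  qed
  have lin: "e k \<ge> real k * \<delta>" for k
  proof (induction k)
    case 0 then show ?case using Q[of 0] by simp
  next
    case (Suc k) then show ?case using Q[of k] by (simp add: algebra_simps)
  qed
  show ?thesis
  proof (intro allI impI)
    fix n :: nat assume n1: "n \<ge> 1"
    have "\<bar>e n\<bar> = \<bar>d n\<bar>" unfolding e_def by (simp add: abs_mult power_abs)
    hence "e n \<le> \<bar>d n\<bar>" by linarith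
    also have "\<dots> \<le> x n + y n"
    proof -
      have "x n > 0" "y n > 0" using px py n1 by auto
      thus ?thesis unfolding d_def by linarith
    qed
    finally have "real n * \<delta> \<le> x n + y n" using lin[of n] by simp
    moreover have "0 \<le> real n * \<delta>" using \<delta>pos by simp
    ultimately have "(real n * \<delta>)^2 \<le> (x n + y n)^2" by (simp add: power_mono)
    also have "\<dots> \<le> 2 * ((x n)^2 + (y n)^2)"
      using zero_le_power2[of "x n - y n"] unfolding power2_diff power2_sum distrib_left by linarith
    finally have A: "(real n * \<delta>)^2 \<le> 2 * ((x n)^2 + (y n)^2)" .
    have s0n: "s0 n > 0" using s0_pos[OF n1] .
    have B: "s0 n * ((x n)^2 + (y n)^2) \<le> 2 * l n"
      using sq_bound[OF x0 ex px n1] sq_bound[OF y0 ey py n1] by (simp add: algebra_simps)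
    have "s0 n * (real n * \<delta>)^2 \<le> s0 n * (2 * ((x n)^2 + (y n)^2))"
      using A s0n by (simp add: mult_left_mono)
    also have "\<dots> = 2 * (s0 n * ((x n)^2 + (y n)^2))" by simp
    also have "\<dots> \<le> 4 * l n" using B by linarith
    finally have C: "s0 n * (real n * \<delta>)^2 \<le> 4 * l n" .
    have pos: "(real n)^2 * s0 n > 0" using n1 s0n by simp
    show "(y 1 - x 1)^2 / 4 \<le> l n / ((real n)^2 * s0 n)"
    proof -
      have e1: "s0 n * (real n * \<delta>)^2 = (real n)^2 * s0 n * \<delta>^2"
        by (simp add: power_mult_distrib mult_ac)
      have e2: "\<delta>^2 / 4 * ((real n)^2 * s0 n) = ((real n)^2 * s0 n * \<delta>^2) / 4" by simp
      have e3: "y 1 - x 1 = \<delta>" by (simp add: \<delta>_def d_def)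
      show ?thesis unfolding pos_le_divide_eq[OF pos] e3 e2 using C e1 by linarith
    qed
  qed
qed

end

theorem corollary5p7:
  fixes l s0 s1 sm \<kappa> :: "nat \<Rightarrow> real" and x0 :: real
  assumes l_pos: "\<And>n. n \<ge> 1 \<Longrightarrow> l n > 0"
    and s0_pos: "\<And>n. n \<ge> 1 \<Longrightarrow> s0 n > 0"
    and s1_pos: "\<And>n. n \<ge> 1 \<Longrightarrow> s1 n > 0"
    and sm_pos: "\<And>n. n \<ge> 1 \<Longrightarrow> sm n > 0"
    and sigma_le: "\<And>n. n \<ge> 1 \<Longrightarrow> max (sm n) (s1 n) \<le> s0 n"
    and kappa_nonneg: "\<And>n. n \<ge> 1 \<Longrightarrow> \<kappa> n \<ge> 0"
    and liminf0: "liminf (\<lambda>n. ereal (l n / ((real n)\<^sup>2 * s0 n))) = 0"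
    and x0_cond: "sm 1 * x0 \<ge> - \<kappa> 1"
  shows "\<exists>!x1::real. x1 > 0 \<and>
           (\<exists>x :: nat \<Rightarrow> real. x 0 = x0 \<and> x 1 = x1 \<and>
              (\<forall>n\<ge>1. l n = x n * (s1 n * x (n + 1) + s0 n * x n + sm n * x (n - 1)) + \<kappa> n * x n) \<and>
              (\<forall>n\<ge>1. x n > 0))"
proof -
  interpret I: rec_ctx l s0 s1 sm \<kappa> x0
    by unfold_locales (use assms in auto)
  have cmp: "x 1 \<le> y 1" if x0: "x 0 = x0" and y0: "y 0 = x0"
    and ex: "\<forall>n\<ge>1. l n = x n * (s1 n * x (n+1) + s0 n * x n + sm n * x (n-1)) + \<kappa> n * x n"
    and ey: "\<forall>n\<ge>1. l n = y n * (s1 n * y (n+1) + s0 n * y n + sm n * y (n-1)) + \<kappa> n * y n"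
    and px: "\<forall>n\<ge>1. x n > 0" and py: "\<forall>n\<ge>1. y n > 0" for x y :: "nat \<Rightarrow> real"
  proof (rule ccontr)
    assume "\<not> x 1 \<le> y 1"
    hence lt: "y 1 < x 1" by simp
    have B: "\<forall>n\<ge>1. (x 1 - y 1)^2 / 4 \<le> l n / ((real n)^2 * s0 n)"
      by (rule I.uniq_bound[OF y0 x0 ey ex py px lt])
    have "eventually (\<lambda>n. ereal ((x 1 - y 1)^2 / 4) \<le> ereal (l n / ((real n)^2 * s0 n))) sequentially"
      using B unfolding eventually_sequentially by auto
    hence "ereal ((x 1 - y 1)^2 / 4) \<le> liminf (\<lambda>n. ereal (l n / ((real n)\<^sup>2 * s0 n)))"
      by (rule Liminf_bounded)
    hence "(x 1 - y 1)^2 / 4 \<le> 0" using liminf0 by simp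
    moreover have "(x 1 - y 1)^2 > 0" using lt by simp
    ultimately show False by simp
  qed
  obtain t where pos: "\<forall>n\<ge>1. I.X t n > 0" using I.exists_pos by blast
  have rec: "\<forall>n\<ge>1. l n = I.X t n * (s1 n * I.X t (n + 1) + s0 n * I.X t n + sm n * I.X t (n - 1)) + \<kappa> n * I.X t n"
  proof (intro allI impI)
    fix n :: nat assume n: "n \<ge> 1"
    have xn: "I.X t n \<noteq> 0" using pos n by force
    have s: "s1 n \<noteq> 0" using s1_pos[OF n] by simp
    show "l n = I.X t n * (s1 n * I.X t (n + 1) + s0 n * I.X t n + sm n * I.X t (n - 1)) + \<kappa> n * I.X t n"
      unfolding I.X_rec[OF n] using xn s by (simp add: field_simps)
  qed
  have t0: "I.X t 0 = x0" by simp
  have t1: "I.X t 1 = t" by simp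
  have tpos: "t > 0" using pos[rule_format, of 1] by simp
  show ?thesis
  proof (rule ex1I[of _ t])
    show "t > 0 \<and> (\<exists>x. x 0 = x0 \<and> x 1 = t \<and>
        (\<forall>n\<ge>1. l n = x n * (s1 n * x (n + 1) + s0 n * x n + sm n * x (n - 1)) + \<kappa> n * x n) \<and>
        (\<forall>n\<ge>1. x n > 0))"
      using tpos rec pos by (intro conjI exI[of _ "I.X t"]) auto
  next
    fix y1 assume "y1 > 0 \<and> (\<exists>x. x 0 = x0 \<and> x 1 = y1 \<and>
        (\<forall>n\<ge>1. l n = x n * (s1 n * x (n + 1) + s0 n * x n + sm n * x (n - 1)) + \<kappa> n * x n) \<and>
        (\<forall>n\<ge>1. x n > 0))"
    then obtain y where y: "y 0 = x0" "y 1 = y1"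
      "\<forall>n\<ge>1. l n = y n * (s1 n * y (n + 1) + s0 n * y n + sm n * y (n - 1)) + \<kappa> n * y n"
      "\<forall>n\<ge>1. y n > 0" by blast
    have "y 1 \<le> I.X t 1" by (rule cmp[OF y(1) t0 y(3) rec y(4) pos])
    moreover have "I.X t 1 \<le> y 1" by (rule cmp[OF t0 y(1) rec y(3) pos y(4)])
    ultimately show "y1 = t" using y(2) t1 by simp
  qed
qed

end
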